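(* Let $A\in\mathbb R^{N\times N}$ be a non-singular $M$-matrix, let $p\in(-1,1)$, and let $x_*\in\mathbb R^N$, $x_*>0$, be the unique positive solution of $Ax=x^p$. Set $C_{\min}=\min_i(A^{-1}\mathbf 1)_i$, $C_{\max}=\max_i(A^{-1}\mathbf 1)_i$, and $m=C_{\min}^{1/(1-p)}$, $M=C_{\max}^{1/(1-p)}$ if $p\in[0,1)$, while $m=(C_{\min}C_{\max}^{p})^{1/(1-p^2)}$, $M=(C_{\min}^{p}C_{\max})^{1/(1-p^2)}$ if $p\in(-1,0)$. Let $x_1\in\mathbb R^N$ with $m\mathbf 1\le x_1\le M\mathbf 1$ and define $x_{n+1}=A^{-1}x_n^{p}$ for $n\ge1$. Then $x_n\to x_*$ as $n\to\infty$, and the convergence is geometric with rate at most $|p|$: there is a constant $K$ (independent of $n$) with $\|x_n-x_*\|_\infty\le K|p|^n$ for all $n$.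
   Context: $\mathbf 1=(1,\dots,1)^\top$; inequalities are componentwise; for $x>0$, $x^p:=(x_i^p)_i$. A $Z$-matrix has non-positive off-diagonal entries; a $Z$-matrix $A$ is an $M$-matrix if $A=s\,\mathrm{Id}-B$ with $B\ge0$ and $s\ge\rho(B)$ (spectral radius), and a non-singular $M$-matrix if moreover invertible (equivalently, invertible with $A^{-1}\ge0$). Existence and uniqueness of $x_*$ holds for non-singular $M$-matrices and $p<1$. *)

theory Defs
  imports "HOL-Analysis.Analysis"
begin

definition spectral_radius :: "real^'n^'n \<Rightarrow> real" where
  "spectral_radius B = Max {cmod l | l. \<exists>v::complex^'n. v \<noteq> 0 \<and>
      (\<chi> i j. complex_of_real (B$i$j)) *v v = l *s v}"

definition Z_matrix :: "real^'n^'n \<Rightarrow> bool" where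
  "Z_matrix A \<longleftrightarrow> (\<forall>i j. i \<noteq> j \<longrightarrow> A$i$j \<le> 0)"

definition M_matrix :: "real^'n^'n \<Rightarrow> bool" where
  "M_matrix A \<longleftrightarrow> Z_matrix A \<and>
     (\<exists>s B. (\<forall>i j. 0 \<le> B$i$j) \<and> A = s *\<^sub>R mat 1 - B \<and> spectral_radius B \<le> s)"

definition nonsingular_M_matrix :: "real^'n^'n \<Rightarrow> bool" where
  "nonsingular_M_matrix A \<longleftrightarrow> M_matrix A \<and> invertible A"

definition vpow :: "real^'n \<Rightarrow> real \<Rightarrow> real^'n" where
  "vpow x p = (\<chi> i. (x$i) powr p)"

definition ones :: "real^'n" where "ones = (\<chi> i. 1)"

definition sup_norm :: "real^'n \<Rightarrow> real" where
  "sup_norm x = Max (range (\<lambda>i. \<bar>x$i\<bar>))"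

end

theory Submission
  imports Defs "HOL-Computational_Algebra.Polynomial"
begin


lemma inj_imp_invertible:
  fixes M :: "'a::field^'n^'n"
  assumes "inj ((*v) M)" shows "invertible M"
proof -
  have "surj ((*v) M)"
    using vec.linear_injective_imp_surjective[OF matrix_vector_mul_linear_gen assms] by simp
  then show ?thesis using assms invertible_eq_bij bij_def by blast
qed

lemma eig_finite:
  fixes Bc :: "complex^'n^'n"
  shows "finite {l. \<exists>v. v \<noteq> 0 \<and> Bc *v v = l *s v}"
proof -
  define D where "D l = (\<chi> i j. Bc$i$j - (if i = j then l else 0))" for l
  define P where "P = (\<Sum>p\<in>{p. p permutes (UNIV::'n set)}. of_int (sign p) *
        (\<Prod>i\<in>UNIV. [:Bc$i$(p i), 0:] - (if p i = i then [:0, 1:] else 0)))"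
  have PD: "poly P l = det (D l)" for l
    unfolding P_def det_def D_def poly_sum poly_prod
    by (intro sum.cong refl) (auto simp: poly_prod intro!: prod.cong)
  have Dv: "D l *v v = Bc *v v - l *s v" for l v
  proof -
    have "(D l *v v)$i = (Bc *v v - l *s v)$i" for i
    proof -
      have "(D l *v v)$i = (\<Sum>j\<in>UNIV. Bc$i$j * v$j - (if i = j then l * v$j else 0))"
        by (simp add: D_def matrix_vector_mult_def) (intro sum.cong refl, auto simp: algebra_simps)
      also have "\<dots> = (\<Sum>j\<in>UNIV. Bc$i$j * v$j) - l * v$i"
        by (simp add: sum_subtractf)
      finally show ?thesis by (simp add: matrix_vector_mult_def)
    qed
    thus ?thesis by (simp add: vec_eq_iff)
  qed
  have sub: "{l. \<exists>v. v \<noteq> 0 \<and> Bc *v v = l *s v} \<subseteq> {l. poly P l = 0}"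
  proof safe
    fix l v assume v: "v \<noteq> 0" "Bc *v v = l *s v"
    have "D l *v v = D l *v 0" using v by (simp add: Dv)
    hence "\<not> inj ((*v) (D l))" using v(1) by (meson injD)
    hence "\<not> invertible (D l)" using inj_matrix_vector_mult by blast
    thus "poly P l = 0" using invertible_det_nz PD by metis
  qed
  define l0 where "l0 = complex_of_real (1 + (\<Sum>i\<in>UNIV. \<Sum>j\<in>UNIV. cmod (Bc$i$j)))"
  have l0n: "cmod l0 = 1 + (\<Sum>i\<in>UNIV. \<Sum>j\<in>UNIV. cmod (Bc$i$j))"
    unfolding l0_def norm_of_real by (rule abs_of_nonneg) (simp add: sum_nonneg)
  have "inj ((*v) (D l0))"
  proof (rule injI)
    fix v w assume "D l0 *v v = D l0 *v w"
    hence "D l0 *v (v - w) = 0" by (simp add: matrix_vector_mult_diff_distrib)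
    then obtain u where u0: "D l0 *v u = 0" and uvw: "u = v - w" by blast
    have "u = 0"
    proof (rule ccontr)
      assume "u \<noteq> 0"
      define mx where "mx = Max (range (\<lambda>i. cmod (u$i)))"
      obtain i where i: "cmod (u$i) = mx"
      proof -
        have "mx \<in> range (\<lambda>i. cmod (u$i))" unfolding mx_def by (rule Max_in) auto
        thus ?thesis using that by auto
      qed
      have mxge: "cmod (u$j) \<le> mx" for j unfolding mx_def by (rule Max_ge) auto
      have "mx > 0"
      proof (rule ccontr)
        assume "\<not> mx > 0"
        hence "\<forall>j. u$j = 0" using mxge by (meson norm_le_zero_iff order.trans not_less)
        thus False using \<open>u \<noteq> 0\<close> by (simp add: vec_eq_iff)
      qed
      have "(Bc *v u)$i = l0 * u$i" using u0 by (simp add: Dv vec_eq_iff)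
      hence "cmod l0 * mx = cmod (\<Sum>j\<in>UNIV. Bc$i$j * u$j)"
        using i by (simp add: matrix_vector_mult_def norm_mult)
      also have "\<dots> \<le> (\<Sum>j\<in>UNIV. cmod (Bc$i$j) * cmod (u$j))"
        by (rule order.trans[OF norm_sum]) (simp add: norm_mult)
      also have "\<dots> \<le> (\<Sum>j\<in>UNIV. cmod (Bc$i$j) * mx)"
        by (intro sum_mono mult_left_mono mxge) auto
      also have "\<dots> = (\<Sum>j\<in>UNIV. cmod (Bc$i$j)) * mx" by (simp add: sum_distrib_right)
      also have "(\<Sum>j\<in>UNIV. cmod (Bc$i$j)) \<le> (\<Sum>i\<in>UNIV. \<Sum>j\<in>UNIV. cmod (Bc$i$j))"
        by (rule member_le_sum[where f = "\<lambda>i. \<Sum>j\<in>UNIV. cmod (Bc$i$j)"]) (auto intro: sum_nonneg)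
      hence "(\<Sum>j\<in>UNIV. cmod (Bc$i$j)) * mx \<le> (cmod l0 - 1) * mx"
        using \<open>mx > 0\<close> unfolding l0n
        by (intro mult_right_mono) (auto simp: sum_nonneg)
      finally show False using \<open>mx > 0\<close> by (simp add: algebra_simps)
    qed
    thus "v = w" using uvw by simp
  qed
  hence "det (D l0) \<noteq> 0" using inj_imp_invertible invertible_det_nz by blast
  hence "P \<noteq> 0" using PD by (metis poly_0)
  thus ?thesis using poly_roots_finite finite_subset sub by blast
qed


lemma Lmul: fixes B :: "real^'n^'n" shows "(t *\<^sub>R mat 1 - B) *v y = t *\<^sub>R y - B *v y"
  by (simp add: matrix_vector_mult_diff_rdistrib flip: scaleR_matrix_vector_assoc)

lemma Lc: fixes B :: "real^'n^'n"
  shows "((t *\<^sub>R mat 1 - B) *v y)$i = t * y$i - (\<Sum>j\<in>UNIV. B$i$j * y$j)"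
  by (subst Lmul) (simp add: matrix_vector_mult_def)

definition Qpos :: "real^'n^'n \<Rightarrow> real \<Rightarrow> bool" where
  "Qpos B t \<longleftrightarrow> (\<exists>u. (\<forall>i. 0 < u$i) \<and> (\<forall>i. 0 < ((t *\<^sub>R mat 1 - B) *v u)$i))"

definition Pmon :: "real^'n^'n \<Rightarrow> real \<Rightarrow> bool" where
  "Pmon B t \<longleftrightarrow> (\<forall>y. (\<forall>i. 0 \<le> ((t *\<^sub>R mat 1 - B) *v y)$i) \<longrightarrow> (\<forall>i. 0 \<le> y$i))"

lemma Q_imp_P:
  fixes B :: "real^'n^'n"
  assumes B: "\<forall>i j. 0 \<le> B$i$j" and Q: "Qpos B t"
  shows "Pmon B t"
  unfolding Pmon_def
proof (rule allI, rule impI)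
  fix y :: "real^'n" assume Ly: "\<forall>i. 0 \<le> ((t *\<^sub>R mat 1 - B) *v y)$i"
  obtain u where u: "\<forall>i. 0 < u$i" "\<forall>i. 0 < ((t *\<^sub>R mat 1 - B) *v u)$i"
    using Q unfolding Qpos_def by blast
  show "\<forall>i. 0 \<le> y$i"
  proof (rule ccontr)
    assume "\<not> (\<forall>i. 0 \<le> y$i)"
    then obtain k where k: "y$k < 0" by (auto simp: not_le)
    define c where "c = Min (range (\<lambda>i. y$i / u$i))"
    have cle: "c \<le> y$j / u$j" for j unfolding c_def by (rule Min_le) auto
    obtain i where i: "y$i / u$i = c"
    proof -
      have "c \<in> range (\<lambda>i. y$i / u$i)" unfolding c_def by (rule Min_in) auto
      thus ?thesis using that by auto
    qed
    have "y$k / u$k < 0" using k u(1) by (simp add: divide_neg_pos)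
    hence c0: "c < 0" using cle[of k] by linarith
    have yj: "c * u$j \<le> y$j" for j using cle[of j] u(1) by (simp add: pos_le_divide_eq)
    have yi: "y$i = c * u$i" using i u(1) by (metis nonzero_eq_divide_eq order_less_irrefl)
    have "(\<Sum>j\<in>UNIV. B$i$j * (c * u$j)) \<le> (\<Sum>j\<in>UNIV. B$i$j * y$j)"
      by (intro sum_mono mult_left_mono yj) (use B in auto)
    hence "((t *\<^sub>R mat 1 - B) *v y)$i \<le> c * ((t *\<^sub>R mat 1 - B) *v u)$i"
      unfolding Lc yi by (simp add: sum_distrib_left algebra_simps)
    also have "\<dots> < 0" using c0 u(2) by (simp add: mult_neg_pos)
    finally show False using Ly by (meson not_less)
  qed
qed

lemma Q_up:
  fixes B :: "real^'n^'n"
  assumes "Qpos B t" "t \<le> t'" shows "Qpos B t'"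
proof -
  obtain u where u: "\<forall>i. 0 < u$i" "\<forall>i. 0 < ((t *\<^sub>R mat 1 - B) *v u)$i"
    using assms unfolding Qpos_def by blast
  have "0 < ((t' *\<^sub>R mat 1 - B) *v u)$i" for i
  proof -
    have "((t' *\<^sub>R mat 1 - B) *v u)$i = ((t *\<^sub>R mat 1 - B) *v u)$i + (t' - t) * u$i"
      unfolding Lc by (simp add: algebra_simps)
    thus ?thesis using u[rule_format, of i] assms(2) by (smt (verit) mult_nonneg_nonneg)
  qed
  thus ?thesis using u unfolding Qpos_def by blast
qed

lemma Q_big:
  fixes B :: "real^'n^'n"
  assumes B: "\<forall>i j. 0 \<le> B$i$j"
  shows "Qpos B (1 + (\<Sum>i\<in>UNIV. \<Sum>j\<in>UNIV. B$i$j))"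
proof -
  let ?u = "(\<chi> i. 1) :: real^'n"
  have "0 < (((1 + (\<Sum>i\<in>UNIV. \<Sum>j\<in>UNIV. B$i$j)) *\<^sub>R mat 1 - B) *v ?u)$i" for i
  proof -
    have "(\<Sum>j\<in>UNIV. B$i$j) \<le> (\<Sum>i\<in>UNIV. \<Sum>j\<in>UNIV. B$i$j)"
      by (rule member_le_sum[where f = "\<lambda>i. \<Sum>j\<in>UNIV. B$i$j"]) (auto intro: sum_nonneg simp: B)
    thus ?thesis unfolding Lc by simp
  qed
  thus ?thesis unfolding Qpos_def by (intro exI[of _ ?u]) auto
qed

lemma P_inv:
  fixes B :: "real^'n^'n"
  assumes "Pmon B t" shows "invertible (t *\<^sub>R mat 1 - B)"
proof (rule inj_imp_invertible, rule injI)
  fix y z :: "real^'n" assume e: "(t *\<^sub>R mat 1 - B) *v y = (t *\<^sub>R mat 1 - B) *v z"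
  have "(t *\<^sub>R mat 1 - B) *v (y - z) = 0" "(t *\<^sub>R mat 1 - B) *v (z - y) = 0"
    using e by (simp_all add: matrix_vector_mult_diff_distrib)
  hence "\<forall>i. 0 \<le> (y - z)$i" "\<forall>i. 0 \<le> (z - y)$i"
    using assms unfolding Pmon_def by (metis order_refl zero_index)+
  thus "y = z" by (simp add: vec_eq_iff) (meson antisym)
qed

lemma inv_surj:
  fixes M :: "real^'n^'n"
  assumes "invertible M" shows "\<exists>u. M *v u = w"
  using assms invertible_eq_bij bij_def by (metis surj_def)

lemma P_Q_down:
  fixes B :: "real^'n^'n"
  assumes B: "\<forall>i j. 0 \<le> B$i$j" and P: "Pmon B t"
  shows "\<exists>\<delta>>0. Qpos B (t - \<delta>)"
proof -
  obtain u where u: "(t *\<^sub>R mat 1 - B) *v u = (\<chi> i. 1)"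
    using inv_surj[OF P_inv[OF P]] by blast
  have u0: "\<forall>i. 0 \<le> u$i" using P u unfolding Pmon_def by simp
  have upos: "0 < u$i" for i
  proof (rule ccontr)
    assume "\<not> 0 < u$i"
    hence "u$i = 0" using u0 by (meson antisym not_less)
    have "0 \<le> (\<Sum>j\<in>UNIV. B$i$j * u$j)" using B u0 by (intro sum_nonneg) simp
    moreover have "((t *\<^sub>R mat 1 - B) *v u)$i = 1" using u by simp
    ultimately show False unfolding Lc using \<open>u$i = 0\<close> by simp
  qed
  define K where "K = (\<Sum>i\<in>UNIV. u$i) + 1"
  have uK: "u$i < K" for i
  proof -
    have "u$i \<le> (\<Sum>i\<in>UNIV. u$i)" by (rule member_le_sum) (auto simp: u0)
    thus ?thesis unfolding K_def by simp
  qed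
  have K0: "K > 0" using uK[of undefined] upos[of undefined] by simp
  define \<delta> where "\<delta> = 1 / (2 * K)"
  have "0 < (((t - \<delta>) *\<^sub>R mat 1 - B) *v u)$i" for i
  proof -
    have "(((t - \<delta>) *\<^sub>R mat 1 - B) *v u)$i = ((t *\<^sub>R mat 1 - B) *v u)$i - \<delta> * u$i"
      unfolding Lc by (simp add: algebra_simps)
    also have "\<dots> = 1 - \<delta> * u$i" using u by simp
    finally have e: "(((t - \<delta>) *\<^sub>R mat 1 - B) *v u)$i = 1 - \<delta> * u$i" .
    have "\<delta> * u$i < 1"
      using uK[of i] K0 upos[of i] unfolding \<delta>_def by (simp add: field_simps)
    thus ?thesis using e by simp
  qed
  hence "Qpos B (t - \<delta>)" unfolding Qpos_def using upos by blast
  moreover have "\<delta> > 0" using K0 unfolding \<delta>_def by simp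
  ultimately show ?thesis by blast
qed



lemma matrix_inv_props:
  fixes M :: "'a::semiring_1^'n^'n"
  assumes "invertible M"
  shows "M ** matrix_inv M = mat 1" "matrix_inv M ** M = mat 1"
  using someI_ex[OF assms[unfolded invertible_def]] unfolding matrix_inv_def by auto

lemma inv_left:
  fixes M :: "'a::comm_semiring_1^'n^'n"
  assumes "invertible M" shows "matrix_inv M *v (M *v w) = w"
  by (simp add: matrix_vector_mul_assoc matrix_inv_props[OF assms])

lemma inv_right:
  fixes M :: "'a::comm_semiring_1^'n^'n"
  assumes "invertible M" shows "M *v (matrix_inv M *v w) = w"
  by (simp add: matrix_vector_mul_assoc matrix_inv_props[OF assms])

lemma P_closed:
  fixes B :: "real^'n^'n"
  assumes P: "\<forall>t'>t. Pmon B t'" and inv: "invertible (t *\<^sub>R mat 1 - B)"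
  shows "Pmon B t"
  unfolding Pmon_def
proof (rule allI, rule impI, rule allI)
  fix y :: "real^'n" and i
  assume z0: "\<forall>i. 0 \<le> ((t *\<^sub>R mat 1 - B) *v y)$i"
  define L where "L = t *\<^sub>R mat 1 - B"
  define z where "z = L *v y"
  define R where "R = matrix_inv L"
  show "0 \<le> y$i"
  proof (rule ccontr)
    assume "\<not> 0 \<le> y$i"
    hence yi: "y$i < 0" by simp
    obtain K where K: "K > 0" "\<And>w. norm (R *v w) \<le> norm w * K"
      using bounded_linear.pos_bounded[OF matrix_vector_mul_bounded_linear[of R]] by blast
    define \<epsilon> where "\<epsilon> = min (1/(2*K)) ((- y$i)/(4*K*(norm y + 1)))"
    have den: "0 < 4*K*(norm y + 1)" using K
      by (intro mult_pos_pos) (auto intro: add_nonneg_pos)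
    have e0: "\<epsilon> > 0" unfolding \<epsilon>_def using K yi den by (simp add: divide_neg_pos)
    have eK: "\<epsilon> * K \<le> 1/2"
    proof -
      have "\<epsilon> \<le> 1/(2*K)" unfolding \<epsilon>_def by simp
      hence "\<epsilon> * K \<le> 1/(2*K) * K" using K by (intro mult_right_mono) auto
      thus ?thesis using K by simp
    qed
    have eK2: "2 * \<epsilon> * K * norm y \<le> (- y$i) / 2"
    proof -
      have "\<epsilon> \<le> (- y$i)/(4*K*(norm y + 1))" unfolding \<epsilon>_def by simp
      hence "\<epsilon> * (4*K*(norm y + 1)) \<le> - y$i"
        using pos_le_divide_eq[OF den] by blast
      moreover have "\<epsilon> * (4*K*norm y) \<le> \<epsilon> * (4*K*(norm y + 1))"
        using e0 K by (intro mult_left_mono) auto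
      ultimately show ?thesis by (simp add: algebra_simps)
    qed
    obtain ye where ye: "((t + \<epsilon>) *\<^sub>R mat 1 - B) *v ye = z"
      using inv_surj[OF P_inv[OF P[rule_format]]] e0 by (metis less_add_same_cancel1)
    have ye0: "\<forall>j. 0 \<le> ye$j" using P[rule_format, of "t + \<epsilon>"] e0 ye z0
      unfolding Pmon_def z_def L_def by simp
    have "((t + \<epsilon>) *\<^sub>R mat 1 - B) *v ye = L *v ye + \<epsilon> *\<^sub>R ye"
      unfolding L_def Lmul by (simp add: algebra_simps)
    hence "L *v (y - ye) = \<epsilon> *\<^sub>R ye"
      using ye unfolding z_def by (simp add: matrix_vector_mult_diff_distrib algebra_simps)
    hence d: "y - ye = \<epsilon> *\<^sub>R (R *v ye)"
      using inv_left[OF inv[folded L_def], of "y - ye"] unfolding R_def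
      by (simp add: matrix_vector_mult_scaleR)
    define dn where "dn = norm (y - ye)"
    have "dn \<le> \<epsilon> * (norm ye * K)" unfolding dn_def d using e0 K by (simp add: mult_left_mono)
    moreover have "norm ye \<le> norm y + dn" unfolding dn_def
      by (metis add_diff_cancel diff_add_cancel norm_triangle_ineq4 add.commute)
    ultimately have "dn \<le> \<epsilon> * ((norm y + dn) * K)"
      using e0 K by (meson mult_left_mono mult_right_mono order_trans less_imp_le)
    hence "dn \<le> \<epsilon> * K * norm y + \<epsilon> * K * dn" by (simp add: algebra_simps)
    moreover have "\<epsilon> * K * dn \<le> 1/2 * dn" using eK unfolding dn_def
      by (intro mult_right_mono) auto
    ultimately have "dn \<le> 2 * \<epsilon> * K * norm y" by simp
    hence dn2: "dn \<le> (- y$i)/2" using eK2 by simp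
    have "\<bar>(y - ye)$i\<bar> \<le> dn" unfolding dn_def by (rule component_le_norm_cart)
    hence "ye$i - dn \<le> y$i" by simp
    thus False using ye0[rule_format, of i] dn2 yi by linarith
  qed
qed

lemma sing_eig:
  fixes B :: "real^'n^'n"
  assumes "\<not> invertible (t *\<^sub>R mat 1 - B)"
  shows "\<bar>t\<bar> \<le> spectral_radius B"
proof -
  have "\<not> inj ((*v) (t *\<^sub>R mat 1 - B))" using assms inj_imp_invertible by blast
  then obtain a b where ab: "a \<noteq> b" "(t *\<^sub>R mat 1 - B) *v a = (t *\<^sub>R mat 1 - B) *v b"
    unfolding inj_def by blast
  define y where "y = a - b"
  have y0: "y \<noteq> 0" using ab(1) unfolding y_def by simp
  have "(t *\<^sub>R mat 1 - B) *v y = 0" using ab(2) unfolding y_def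
    by (simp add: matrix_vector_mult_diff_distrib)
  hence By: "B *v y = t *\<^sub>R y" unfolding Lmul by simp
  define v where "v = (\<chi> i. complex_of_real (y$i))"
  define Bc where "Bc = (\<chi> i j. complex_of_real (B$i$j))"
  have v0: "v \<noteq> 0" using y0 unfolding v_def by (auto simp: vec_eq_iff)
  have "Bc *v v = complex_of_real t *s v"
  proof -
    have "(Bc *v v)$i = (complex_of_real t *s v)$i" for i
    proof -
      have "(Bc *v v)$i = complex_of_real ((B *v y)$i)"
        unfolding Bc_def v_def by (simp add: matrix_vector_mult_def)
      also have "\<dots> = complex_of_real t * complex_of_real (y$i)" using By by simp
      finally show ?thesis unfolding v_def by simp
    qed
    thus ?thesis by (simp add: vec_eq_iff)
  qed
  hence mem: "\<bar>t\<bar> \<in> {cmod l | l. \<exists>v::complex^'n. v \<noteq> 0 \<and> Bc *v v = l *s v}"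
    using v0 by (metis (mono_tags, lifting) mem_Collect_eq norm_of_real)
  have fin: "finite {cmod l | l. \<exists>v::complex^'n. v \<noteq> 0 \<and> Bc *v v = l *s v}"
    using finite_imageI[OF eig_finite[of Bc], of cmod] by (simp add: setcompr_eq_image)
  show ?thesis unfolding spectral_radius_def Bc_def[symmetric] using Max_ge[OF fin mem] .
qed



lemma Mmat_main:
  fixes A :: "real^'n^'n"
  assumes "nonsingular_M_matrix A"
  shows "\<exists>s B. (\<forall>i j. 0 \<le> B$i$j) \<and> A = s *\<^sub>R mat 1 - B \<and> Qpos B s"
proof -
  obtain s B where B: "\<forall>i j. 0 \<le> B$i$j" and AsB: "A = s *\<^sub>R mat 1 - B"
    and rho: "spectral_radius B \<le> s" and inv: "invertible A"
    using assms unfolding nonsingular_M_matrix_def M_matrix_def by blast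
  have "Qpos B s"
  proof (rule ccontr)
    assume nQ: "\<not> Qpos B s"
    define T where "T = {t. Qpos B t}"
    have Tne: "T \<noteq> {}" using Q_big[OF B] unfolding T_def by blast
    have Tlow: "s < t" if "t \<in> T" for t
      using that nQ Q_up unfolding T_def by (metis mem_Collect_eq not_less)
    have bdd: "bdd_below T" using Tlow by (meson bdd_below.I less_imp_le)
    define ts where "ts = Inf T"
    have s_le: "s \<le> ts" unfolding ts_def using Tne Tlow by (meson cInf_greatest less_imp_le)
    have Pgt: "\<forall>t'>ts. Pmon B t'"
    proof (intro allI impI)
      fix t' assume "ts < t'"
      then obtain t where "t \<in> T" "t < t'" unfolding ts_def using cInf_lessD[OF Tne] by blast
      thus "Pmon B t'" using Q_up Q_imp_P[OF B] unfolding T_def by (metis less_imp_le mem_Collect_eq)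
    qed
    show False
    proof (cases "invertible (ts *\<^sub>R mat 1 - B)")
      case True
      have "Pmon B ts" by (rule P_closed[OF Pgt True])
      then obtain \<delta> where "\<delta> > 0" "Qpos B (ts - \<delta>)" using P_Q_down[OF B] by blast
      hence "ts \<le> ts - \<delta>" unfolding ts_def using cInf_lower[OF _ bdd] T_def by auto
      thus False using \<open>\<delta> > 0\<close> by simp
    next
      case False
      hence "\<bar>ts\<bar> \<le> spectral_radius B" by (rule sing_eig)
      hence "ts = s" using rho s_le by linarith
      thus False using False inv AsB by simp
    qed
  qed
  thus ?thesis using B AsB by blast
qed

lemma G_props:
  fixes A :: "real^'n^'n"
  assumes "nonsingular_M_matrix A"
  shows "\<forall>z. (\<forall>i. 0 \<le> z$i) \<longrightarrow> (\<forall>i. 0 \<le> (matrix_inv A *v z)$i)"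
    and "\<forall>i. 0 < (matrix_inv A *v ones)$i"
    and "invertible A"
proof -
  show inv: "invertible A" using assms unfolding nonsingular_M_matrix_def by blast
  obtain s B where B: "\<forall>i j. 0 \<le> B$i$j" and AsB: "A = s *\<^sub>R mat 1 - B" and Q: "Qpos B s"
    using Mmat_main[OF assms] by blast
  have P: "Pmon B s" by (rule Q_imp_P[OF B Q])
  show G0: "\<forall>z. (\<forall>i. 0 \<le> z$i) \<longrightarrow> (\<forall>i. 0 \<le> (matrix_inv A *v z)$i)"
    using P inv_right[OF inv] unfolding Pmon_def AsB by simp
  show "\<forall>i. 0 < (matrix_inv A *v ones)$i"
  proof
    fix i
    define u where "u = matrix_inv A *v ones"
    have u0: "\<forall>i. 0 \<le> u$i" using G0 unfolding u_def ones_def by simp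
    have Au: "A *v u = ones" unfolding u_def by (rule inv_right[OF inv])
    show "0 < u$i"
    proof (rule ccontr)
      assume "\<not> 0 < u$i"
      hence "u$i = 0" using u0 by (meson antisym not_less)
      have "0 \<le> (\<Sum>j\<in>UNIV. B$i$j * u$j)" using B u0 by (intro sum_nonneg) simp
      moreover have "((s *\<^sub>R mat 1 - B) *v u)$i = 1" using Au AsB by (simp add: ones_def)
      ultimately show False unfolding Lc using \<open>u$i = 0\<close> by simp
    qed
  qed
qed

lemma step:
  fixes G :: "real^'n^'n"
  assumes Gmon: "\<forall>z. (\<forall>i. 0 \<le> z$i) \<longrightarrow> (\<forall>i. 0 \<le> (G *v z)$i)"
    and fx: "G *v vpow xs p = xs" and xsp: "\<forall>i. 0 < xs$i"
    and y: "\<forall>i. 0 < y$i \<and> \<bar>ln (y$i) - ln (xs$i)\<bar> \<le> d"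
  shows "\<forall>i. 0 < (G *v vpow y p)$i \<and> \<bar>ln ((G *v vpow y p)$i) - ln (xs$i)\<bar> \<le> \<bar>p\<bar> * d"
proof -
  define e where "e = \<bar>p\<bar> * d"
  have b: "exp (-e) * (xs$i powr p) \<le> y$i powr p \<and> y$i powr p \<le> exp e * (xs$i powr p)" for i
  proof -
    have "\<bar>p * ln (y$i) - p * ln (xs$i)\<bar> = \<bar>p\<bar> * \<bar>ln (y$i) - ln (xs$i)\<bar>"
      by (simp add: abs_mult flip: right_diff_distrib)
    also have "\<dots> \<le> e" unfolding e_def using y by (intro mult_left_mono) auto
    finally have h: "\<bar>p * ln (y$i) - p * ln (xs$i)\<bar> \<le> e" .
    have yi: "0 < y$i" "0 < xs$i" using y xsp by auto
    have "y$i powr p = exp (p * ln (y$i))" "xs$i powr p = exp (p * ln (xs$i))"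
      using yi by (simp_all add: powr_def mult.commute)
    moreover have "p * ln (xs$i) - e \<le> p * ln (y$i)" "p * ln (y$i) \<le> p * ln (xs$i) + e"
      using h by (auto simp: abs_le_iff)
    moreover have "exp (-e) * exp (p * ln (xs$i)) = exp (p * ln (xs$i) - e)"
      "exp e * exp (p * ln (xs$i)) = exp (p * ln (xs$i) + e)"
      by (simp_all add: mult_exp_exp)
    ultimately show ?thesis by simp
  qed
  define w where "w = vpow y p"
  define wx where "wx = vpow xs p"
  have "\<forall>i. 0 \<le> (w - exp (-e) *\<^sub>R wx)$i" using b unfolding w_def wx_def vpow_def by simp
  hence "\<forall>i. 0 \<le> (G *v (w - exp (-e) *\<^sub>R wx))$i" using Gmon by blast
  hence lo: "\<forall>i. exp (-e) * xs$i \<le> (G *v w)$i"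
    using fx unfolding wx_def by (simp add: matrix_vector_mult_diff_distrib matrix_vector_mult_scaleR)
  have "\<forall>i. 0 \<le> (exp e *\<^sub>R wx - w)$i" using b unfolding w_def wx_def vpow_def by simp
  hence "\<forall>i. 0 \<le> (G *v (exp e *\<^sub>R wx - w))$i" using Gmon by blast
  hence hi: "\<forall>i. (G *v w)$i \<le> exp e * xs$i"
    using fx unfolding wx_def by (simp add: matrix_vector_mult_diff_distrib matrix_vector_mult_scaleR)
  show ?thesis unfolding e_def[symmetric] w_def[symmetric]
  proof
    fix i
    have p1: "0 < exp (-e) * xs$i" using xsp by simp
    hence gp: "0 < (G *v w)$i" using lo by (meson less_le_trans)
    have "ln (exp (-e) * xs$i) \<le> ln ((G *v w)$i)" using lo[rule_format, of i] p1 gp by simp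
    moreover have "ln ((G *v w)$i) \<le> ln (exp e * xs$i)" using hi[rule_format, of i] gp by simp
    moreover have "ln (exp (-e) * xs$i) = -e + ln (xs$i)" "ln (exp e * xs$i) = e + ln (xs$i)"
      using xsp[rule_format, of i] by (simp_all add: ln_mult)
    ultimately show "0 < (G *v w)$i \<and> \<bar>ln ((G *v w)$i) - ln (xs$i)\<bar> \<le> e" using gp by auto
  qed
qed

lemma expbound: fixes t :: real shows "\<bar>exp t - 1\<bar> \<le> \<bar>t\<bar> * exp \<bar>t\<bar>"
proof (cases "t \<ge> 0")
  case True
  have "1 - t \<le> exp (-t)" using exp_ge_add_one_self[of "-t"] by simp
  hence "(1 - t) * exp t \<le> exp (-t) * exp t" by (intro mult_right_mono) auto
  hence "exp t - t * exp t \<le> 1" by (simp add: algebra_simps flip: exp_add)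
  thus ?thesis using True by simp
next
  case False
  have "1 + t \<le> exp t" by (rule exp_ge_add_one_self)
  moreover have "exp t \<le> 1" using False by simp
  moreover have "- t \<le> - t * exp (- t)" using False by simp
  moreover have "\<bar>exp t - 1\<bar> = 1 - exp t" "\<bar>t\<bar> * exp \<bar>t\<bar> = - t * exp (- t)" using False by auto
  ultimately show ?thesis by linarith
qed



theorem proposition5p1:
  fixes A :: "real^'n^'n" and p :: real and xs :: "real^'n"
    and x :: "nat \<Rightarrow> real^'n" and Cmin Cmax m M :: real
  assumes hA: "nonsingular_M_matrix A"
    and hp: "-1 < p" "p < 1"
    and hxs_pos: "\<forall>i. 0 < xs$i"
    and hxs_sol: "A *v xs = vpow xs p"
    and hCmin: "Cmin = Min (range (\<lambda>i. (matrix_inv A *v ones)$i))"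
    and hCmax: "Cmax = Max (range (\<lambda>i. (matrix_inv A *v ones)$i))"
    and hm: "m = (if 0 \<le> p then Cmin powr (1/(1-p))
                  else (Cmin * Cmax powr p) powr (1/(1-p^2)))"
    and hM: "M = (if 0 \<le> p then Cmax powr (1/(1-p))
                  else (Cmin powr p * Cmax) powr (1/(1-p^2)))"
    and hx1: "\<forall>i. m \<le> x 1 $ i \<and> x 1 $ i \<le> M"
    and hrec: "\<forall>n\<ge>1. x (Suc n) = matrix_inv A *v vpow (x n) p"
  shows "(x \<longlongrightarrow> xs) sequentially \<and>
         (\<exists>K. \<forall>n\<ge>1. sup_norm (x n - xs) \<le> K * \<bar>p\<bar>^(n-1))"
proof -
  define G where "G = matrix_inv A"
  have Gmon: "\<forall>z. (\<forall>i. 0 \<le> z$i) \<longrightarrow> (\<forall>i. 0 \<le> (G *v z)$i)"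
    and g0: "\<forall>i. 0 < (G *v ones)$i" and inv: "invertible A"
    using G_props[OF hA] unfolding G_def by auto
  have fx: "G *v vpow xs p = xs" unfolding G_def hxs_sol[symmetric] by (rule inv_left[OF inv])
  have Cmin0: "0 < Cmin" unfolding hCmin using g0 unfolding G_def by simp
  have "Cmin \<le> (matrix_inv A *v ones)$k" for k unfolding hCmin by (rule Min_le) auto
  moreover have "(matrix_inv A *v ones)$k \<le> Cmax" for k unfolding hCmax by (rule Max_ge) auto
  ultimately have "Cmin \<le> Cmax" by (meson order_trans)
  hence Cmax0: "0 < Cmax" using Cmin0 by simp
  have m0: "0 < m" unfolding hm using Cmin0 Cmax0 by simp
  have x1p: "\<forall>i. 0 < x 1 $ i" using hx1 m0 by (meson less_le_trans)
  define c where "c = Max (range (\<lambda>i. \<bar>ln (x 1 $ i) - ln (xs $ i)\<bar>))"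
  have cge: "\<bar>ln (x 1 $ i) - ln (xs $ i)\<bar> \<le> c" for i unfolding c_def by (rule Max_ge) auto
  have c0: "0 \<le> c" using cge[of undefined] by linarith
  have inv_n: "\<forall>i. 0 < x n $ i \<and> \<bar>ln (x n $ i) - ln (xs $ i)\<bar> \<le> c * \<bar>p\<bar>^(n-1)" if "n \<ge> 1" for n
    using that
  proof (induction n rule: nat_induct_at_least)
    case base
    then show ?case using x1p cge by simp
  next
    case (Suc n)
    have eq2: "\<bar>p\<bar> * (c * \<bar>p\<bar>^(n-1)) = c * \<bar>p\<bar>^(Suc n - 1)"
      using Suc.hyps by (cases n) (auto simp: algebra_simps)
    have st: "\<forall>i. 0 < (G *v vpow (x n) p)$i \<and> \<bar>ln ((G *v vpow (x n) p)$i) - ln (xs$i)\<bar> \<le> c * \<bar>p\<bar>^(Suc n - 1)"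
      using step[OF Gmon fx hxs_pos Suc.IH] unfolding eq2 .
    have eqx: "x (Suc n) = G *v vpow (x n) p" using hrec Suc.hyps unfolding G_def by simp
    show ?case unfolding eqx using st .
  qed
  have pw1: "\<bar>p\<bar>^(n-1) \<le> 1" for n using hp by (intro power_le_one) auto
  define S where "S = (\<Sum>i\<in>UNIV. xs$i)"
  define K where "K = S * exp c * c"
  have compb: "\<bar>(x n - xs)$i\<bar> \<le> K * \<bar>p\<bar>^(n-1)" if "n \<ge> 1" for n i
  proof -
    define t where "t = ln (x n $ i) - ln (xs $ i)"
    have xp: "0 < x n $ i" and tb: "\<bar>t\<bar> \<le> c * \<bar>p\<bar>^(n-1)" using inv_n[OF that] unfolding t_def by auto
    have xsi: "0 < xs$i" using hxs_pos by simp
    have "x n $ i = xs$i * exp t" unfolding t_def using xp xsi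
      by (simp add: exp_diff)
    hence "(x n - xs)$i = xs$i * (exp t - 1)" by (simp add: algebra_simps)
    hence "\<bar>(x n - xs)$i\<bar> = xs$i * \<bar>exp t - 1\<bar>" using xsi
      by (simp add: abs_mult abs_of_pos)
    also have "\<dots> \<le> xs$i * (\<bar>t\<bar> * exp \<bar>t\<bar>)"
      using hxs_pos expbound by (intro mult_left_mono) (auto simp: less_imp_le)
    also have "\<dots> \<le> S * ((c * \<bar>p\<bar>^(n-1)) * exp c)"
    proof (rule mult_mono)
      show "xs$i \<le> S" unfolding S_def by (rule member_le_sum) (auto simp: hxs_pos less_imp_le)
      have "\<bar>t\<bar> \<le> c" using tb pw1[of n] c0 by (meson mult_left_le order_trans)
      thus "\<bar>t\<bar> * exp \<bar>t\<bar> \<le> c * \<bar>p\<bar> ^ (n - 1) * exp c"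
        using tb by (intro mult_mono) auto
      show "0 \<le> S" unfolding S_def by (rule sum_nonneg) (auto simp: hxs_pos less_imp_le)
      show "0 \<le> \<bar>t\<bar> * exp \<bar>t\<bar>" by simp
    qed
    also have "\<dots> = K * \<bar>p\<bar>^(n-1)" unfolding K_def by (simp add: algebra_simps)
    finally show ?thesis .
  qed
  have bound: "\<forall>n\<ge>1. sup_norm (x n - xs) \<le> K * \<bar>p\<bar>^(n-1)"
    unfolding sup_norm_def using compb by auto
  have lim0: "(\<lambda>n. K * \<bar>p\<bar>^(n-1)) \<longlonglongrightarrow> 0"
  proof -
    have "(\<lambda>n. K * \<bar>p\<bar>^n) \<longlonglongrightarrow> 0" using hp by (intro tendsto_mult_right_zero LIMSEQ_power_zero) auto
    hence "(\<lambda>n. K * \<bar>p\<bar>^(Suc n - 1)) \<longlonglongrightarrow> 0" by simp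
    thus ?thesis by (rule LIMSEQ_imp_Suc)
  qed
  have "(x \<longlongrightarrow> xs) sequentially"
  proof (rule vec_tendstoI)
    fix i
    have "eventually (\<lambda>n. norm (x n $ i - xs $ i) \<le> K * \<bar>p\<bar>^(n-1)) sequentially"
      by (rule eventually_mono[OF eventually_ge_at_top[of 1]]) (use compb in simp)
    hence "((\<lambda>n. x n $ i - xs $ i) \<longlongrightarrow> 0) sequentially"
      by (rule Lim_null_comparison) (rule lim0)
    thus "((\<lambda>n. x n $ i) \<longlongrightarrow> xs $ i) sequentially" by (rule LIM_zero_cancel)
  qed
  thus ?thesis using bound by blast
qed


end
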